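(* Let $A\in\mathbb{R}^{n\times n}$ be symmetric with all eigenvalues in $[\mu,L]$, where $0<\mu\le L$, let $b\in\mathbb{R}^n$, and let $f(x)=\frac12 x^\top A x-b^\top x$, with unique minimizer $x^*=A^{-1}b$. Fix a step size $0<\eta\le \frac{2}{L+\mu}$, a window length $m\ge 1$, a regularization parameter $\lambda>0$, and an initial point $x_0\in\mathbb{R}^n$. Let $(x_k)_{k\ge0}$ be generated by Anderson-accelerated gradient descent with relaxation parameter $\beta=1$ (described in the context), and assume $\nabla f(x_k)\neq 0$ for the indices considered. Then for every $k\ge 0$, $$\frac{\|\nabla f(x_{k+1})\|}{\|\nabla f(x_k)\|}\le \delta_k(1-\eta\mu),\qquad \delta_k:=\frac{\|\Pi_k\nabla f(x_k)\|}{\|\nabla f(x_k)\|}\le 1,$$ where $\Pi_k=I-U_k(U_k^\top U_k+\lambda I)^{-1}U_k^\top$. Moreover, for every $k\ge0$, $$\|x_{k+1}-x^*\|\le \Big(\prod_{j=0}^{k}\delta_j\Big)(1-\eta\mu)^{k+1}\frac{L}{\mu}\,\|x_0-x^*\|.$$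
   Context: Norms are Euclidean $\ell^2$ norms (operator norm for matrices). Let $G(x)=x-\eta\nabla f(x)$. Anderson-accelerated gradient descent (AA-GD) with $\beta=1$: set $x_1=G(x_0)$; for $k\ge1$, let $m_k=\min\{m,k\}$, let $U_k=[U_{k,k-m_k},\dots,U_{k,k-1}]\in\mathbb{R}^{n\times m_k}$ with columns $U_{k,j}=\nabla f(x_k)-\nabla f(x_j)$, compute the weights $(\alpha^k_{k-m_k},\dots,\alpha^k_{k-1})^\top=(U_k^\top U_k+\lambda I)^{-1}U_k^\top\nabla f(x_k)$ (the minimizer of $\|\nabla f(x_k)-U_k\alpha\|^2+\lambda\|\alpha\|^2$), set $\alpha^k_k=1-\sum_{j=k-m_k}^{k-1}\alpha^k_j$ (so the weights sum to one), and define $x_{k+1}=\sum_{j=k-m_k}^{k}\alpha^k_j G(x_j)$. For $k=0$ the matrix $U_0$ has no columns, so $\Pi_0=I$ and $\delta_0=1$. *)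

theory Defs
  imports "HOL-Analysis.Analysis"
begin

text \<open>Quadratic objective f(x) = 1/2 x^T A x - b^T x and its gradient
  (for symmetric A the gradient is A x - b).\<close>
definition quad_f :: "real^'n^'n \<Rightarrow> real^'n \<Rightarrow> real^'n \<Rightarrow> real" where
  "quad_f A b x = (1/2) * (x \<bullet> (A *v x)) - b \<bullet> x"

definition grad_f :: "real^'n^'n \<Rightarrow> real^'n \<Rightarrow> real^'n \<Rightarrow> real^'n" where
  "grad_f A b x = A *v x - b"

definition G_map :: "real^'n^'n \<Rightarrow> real^'n \<Rightarrow> real \<Rightarrow> real^'n \<Rightarrow> real^'n" where
  "G_map A b eta x = x - eta *\<^sub>R grad_f A b x"

definition is_eigenvalue :: "real^'n^'n \<Rightarrow> real \<Rightarrow> bool" where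
  "is_eigenvalue A c \<longleftrightarrow> (\<exists>v. v \<noteq> 0 \<and> A *v v = c *\<^sub>R v)"

text \<open>Anderson weights: the vector alpha (indexed by J, zero outside J) solving
  (U^T U + lambda I) alpha = U^T g, where the columns of U are u j (j in J);
  i.e. alpha = (U^T U + lambda I)^{-1} U^T g.\<close>
definition aa_weights :: "(nat \<Rightarrow> real^'n) \<Rightarrow> nat set \<Rightarrow> real^'n \<Rightarrow> real \<Rightarrow> nat \<Rightarrow> real" where
  "aa_weights u J g lam = (THE \<alpha>. (\<forall>j. j \<notin> J \<longrightarrow> \<alpha> j = 0) \<and>
      (\<forall>i\<in>J. (\<Sum>j\<in>J. (u i \<bullet> u j) * \<alpha> j) + lam * \<alpha> i = u i \<bullet> g))"

definition aa_window :: "nat \<Rightarrow> nat \<Rightarrow> nat set" where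
  "aa_window m k = {k - min m k ..< k}"

definition aa_U :: "real^'n^'n \<Rightarrow> real^'n \<Rightarrow> (nat \<Rightarrow> real^'n) \<Rightarrow> nat \<Rightarrow> nat \<Rightarrow> real^'n" where
  "aa_U A b x k j = grad_f A b (x k) - grad_f A b (x j)"

definition aa_alpha :: "real^'n^'n \<Rightarrow> real^'n \<Rightarrow> real \<Rightarrow> nat \<Rightarrow> (nat \<Rightarrow> real^'n) \<Rightarrow> nat \<Rightarrow> nat \<Rightarrow> real" where
  "aa_alpha A b lam m x k = aa_weights (aa_U A b x k) (aa_window m k) (grad_f A b (x k)) lam"

text \<open>Pi_k applied to grad f(x_k):  Pi_k g = g - U_k (U_k^T U_k + lambda I)^{-1} U_k^T g.\<close>
definition aa_Pi_grad :: "real^'n^'n \<Rightarrow> real^'n \<Rightarrow> real \<Rightarrow> nat \<Rightarrow> (nat \<Rightarrow> real^'n) \<Rightarrow> nat \<Rightarrow> real^'n" where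
  "aa_Pi_grad A b lam m x k = grad_f A b (x k) -
     (\<Sum>j\<in>aa_window m k. aa_alpha A b lam m x k j *\<^sub>R aa_U A b x k j)"

definition aa_delta :: "real^'n^'n \<Rightarrow> real^'n \<Rightarrow> real \<Rightarrow> nat \<Rightarrow> (nat \<Rightarrow> real^'n) \<Rightarrow> nat \<Rightarrow> real" where
  "aa_delta A b lam m x k = norm (aa_Pi_grad A b lam m x k) / norm (grad_f A b (x k))"

text \<open>The AA-GD (beta = 1) update: x_{k+1} = sum_{j in window} alpha_j G(x_j) + alpha_k G(x_k),
  with alpha_k = 1 - sum of the other weights.  For k = 0 the window is empty, so x_1 = G(x_0).\<close>
definition aa_next :: "real^'n^'n \<Rightarrow> real^'n \<Rightarrow> real \<Rightarrow> real \<Rightarrow> nat \<Rightarrow> (nat \<Rightarrow> real^'n) \<Rightarrow> nat \<Rightarrow> real^'n" where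
  "aa_next A b eta lam m x k =
     (\<Sum>j\<in>aa_window m k. aa_alpha A b lam m x k j *\<^sub>R G_map A b eta (x j))
     + (1 - (\<Sum>j\<in>aa_window m k. aa_alpha A b lam m x k j)) *\<^sub>R G_map A b eta (x k)"

end

theory Submission
  imports Defs
begin

lemma sym_inner:
  fixes A :: "real^'n^'n"
  assumes "transpose A = A"
  shows "x \<bullet> (A *v y) = (A *v x) \<bullet> y"
proof -
  have "x \<bullet> (A *v y) = (x v* A) \<bullet> y" by (simp add: dot_lmul_matrix)
  also have "x v* A = A *v x" by (metis assms vector_transpose_matrix)
  finally show ?thesis .
qed

lemma ineq_zero:
  fixes a c :: real
  assumes "\<And>t. 2 * t * a \<le> t^2 * c"
  shows "a = 0"
proof (rule ccontr)
  assume a: "a \<noteq> 0"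
  define C where "C = \<bar>c\<bar> + 1"
  have C: "C > 0" "c < C" unfolding C_def by auto
  have "2 * (a / C) * a \<le> (a/C)^2 * c" by (rule assms)
  hence "2 * a^2 * C \<le> a^2 * c" using C by (simp add: field_simps power2_eq_square)
  moreover have "a^2 > 0" using a by simp
  ultimately have "2 * C \<le> c" by (simp add: mult.commute)
  thus False using C by linarith
qed

lemma quad_max_eig:
  fixes S :: "real^'n^'n"
  assumes symm: "transpose S = S"
  shows "\<exists>M. is_eigenvalue S M \<and> (\<forall>v. v \<bullet> (S *v v) \<le> M * (norm v)^2)"
proof -
  let ?q = "\<lambda>v. v \<bullet> (S *v v)"
  have cq: "continuous_on (sphere 0 1) ?q"
    by (intro continuous_intros linear_continuous_on) (auto intro: linear_linear[THEN iffD1] matrix_vector_mul_linear)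
  have ne: "sphere (0::real^'n) 1 \<noteq> {}"
  proof -
    have "norm (axis undefined (1::real) :: real^'n) = 1" by simp
    thus ?thesis by auto
  qed
  obtain v0 where v0: "v0 \<in> sphere 0 1" and mx: "\<And>y. y \<in> sphere 0 1 \<Longrightarrow> ?q y \<le> ?q v0"
    using continuous_attains_sup[OF compact_sphere ne cq] by blast
  define M where "M = ?q v0"
  have nv0: "norm v0 = 1" using v0 by simp
  have all: "?q y \<le> M * (norm y)^2" for y
  proof (cases "y = 0")
    case True thus ?thesis by simp
  next
    case False
    let ?z = "(1 / norm y) *\<^sub>R y"
    have "?z \<in> sphere 0 1" using False by simp
    hence "?q ?z \<le> M" using mx M_def by blast
    moreover have "?q ?z = ?q y / (norm y)^2"
    proof -
      have "S *v ?z = (1/norm y) *\<^sub>R (S *v y)" by (rule matrix_vector_mult_scaleR)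
      thus ?thesis by (simp add: power2_eq_square)
    qed
    ultimately have "?q y / (norm y)^2 \<le> M" by linarith
    moreover have "(norm y)^2 > 0" using False by simp
    ultimately show ?thesis by (simp add: pos_divide_le_eq)
  qed
  have key: "w \<bullet> (S *v v0 - M *\<^sub>R v0) = 0" for w
  proof (rule ineq_zero)
    fix t :: real
    have "?q (v0 + t *\<^sub>R w) \<le> M * (norm (v0 + t *\<^sub>R w))^2" by (rule all)
    moreover have "?q (v0 + t *\<^sub>R w) = M + 2 * t * (w \<bullet> (S *v v0)) + t^2 * ?q w"
      using sym_inner[OF symm, of v0 w] inner_commute[of "S *v v0" w]
      by (simp add: M_def matrix_vector_right_distrib matrix_vector_mult_scaleR inner_add_left inner_add_right algebra_simps power2_eq_square)
    moreover have "(norm (v0 + t *\<^sub>R w))^2 = 1 + 2 * t * (w \<bullet> v0) + t^2 * (norm w)^2"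
    proof -
      have "v0 \<bullet> v0 = 1" using nv0 by (metis norm_eq_sqrt_inner real_sqrt_eq_1_iff)
      moreover have "w \<bullet> w = (norm w)^2" by (simp add: power2_norm_eq_inner)
      ultimately show ?thesis unfolding power2_norm_eq_inner
        by (simp add: inner_add_left inner_add_right inner_commute algebra_simps power2_eq_square)
    qed
    ultimately show "2 * t * (w \<bullet> (S *v v0 - M *\<^sub>R v0)) \<le> t^2 * (M * (norm w)^2 - ?q w)"
      by (simp add: inner_diff_right algebra_simps)
  qed
  have "S *v v0 - M *\<^sub>R v0 = 0" using key[of "S *v v0 - M *\<^sub>R v0"] by simp
  hence "is_eigenvalue S M" unfolding is_eigenvalue_def using nv0 by (intro exI[of _ v0]) auto
  thus ?thesis using all by blast
qed

lemma sym_bound: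
  fixes f :: "real^'n \<Rightarrow> real^'n"
  assumes lin: "linear f" and sy: "\<And>x y. x \<bullet> f y = f x \<bullet> y"
    and q: "\<And>v. \<bar>v \<bullet> f v\<bar> \<le> c * (norm v)^2"
  shows "norm (f v) \<le> c * norm v"
proof (cases "f v = 0")
  case True
  have "0 \<le> c * (norm v)^2" using q[of v] by linarith
  hence "0 \<le> c * norm v"
  proof (cases "v = 0")
    case False
    hence "(norm v)^2 > 0" by simp
    hence "0 \<le> c" using \<open>0 \<le> c * (norm v)^2\<close> by (simp add: zero_le_mult_iff)
    thus ?thesis by simp
  qed simp
  thus ?thesis using True by simp
next
  case False
  have pol: "4 * (u \<bullet> f v) \<le> 2 * c * ((norm u)^2 + (norm v)^2)" for u
  proof -
    have e1: "(u+v) \<bullet> f (u+v) - (u-v) \<bullet> f (u-v) = 4 * (u \<bullet> f v)"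
      using sy[of u v] sy[of v u] inner_commute[of "f u" v]
      by (simp add: linear_add[OF lin] linear_diff[OF lin] inner_add_left inner_add_right inner_diff_left inner_diff_right)
    have a: "(u+v) \<bullet> f (u+v) \<le> c * (norm (u+v))^2" using q[of "u+v"] by linarith
    have b: "- ((u-v) \<bullet> f (u-v)) \<le> c * (norm (u-v))^2" using q[of "u-v"] by linarith
    have eq: "(norm (u+v))^2 + (norm (u-v))^2 = 2 * ((norm u)^2 + (norm v)^2)"
      unfolding power2_norm_eq_inner by (simp add: inner_add_left inner_add_right inner_diff_left inner_diff_right inner_commute)
    have "4 * (u \<bullet> f v) \<le> c * (norm (u+v))^2 + c * (norm (u-v))^2" using e1 a b by linarith
    also have "\<dots> = c * ((norm (u+v))^2 + (norm (u-v))^2)" by (simp add: distrib_left)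
    also have "\<dots> = 2 * c * ((norm u)^2 + (norm v)^2)" using eq by simp
    finally show ?thesis .
  qed
  define t where "t = norm v / norm (f v)"
  have nf: "norm (f v) > 0" using False by simp
  have "4 * ((t *\<^sub>R f v) \<bullet> f v) \<le> 2 * c * ((norm (t *\<^sub>R f v))^2 + (norm v)^2)" by (rule pol)
  moreover have "(t *\<^sub>R f v) \<bullet> f v = norm v * norm (f v)"
    using nf by (simp add: t_def power2_norm_eq_inner[symmetric] power2_eq_square)
  moreover have "(norm (t *\<^sub>R f v))^2 = (norm v)^2"
    using nf by (simp add: t_def power2_eq_square)
  ultimately have "4 * (norm v * norm (f v)) \<le> 4 * c * (norm v)^2" by simp
  hence h: "norm v * norm (f v) \<le> norm v * (c * norm v)" by (simp add: power2_eq_square algebra_simps)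
  show ?thesis
  proof (cases "v = 0")
    case True thus ?thesis using False by (simp add: linear_0[OF lin])
  next
    case f: False
    thus ?thesis using h by simp
  qed
qed

lemma transpose_uminus: "transpose (- A) = - transpose (A::real^'n^'n)"
  by (simp add: transpose_def vec_eq_iff)

lemma uminus_mv: "(- A) *v v = - (A *v (v::real^'n))"
  for A :: "real^'n^'n"
  by (simp add: matrix_vector_mult_def vec_eq_iff sum_negf)

lemma eig_uminus: "is_eigenvalue (- A) c \<Longrightarrow> is_eigenvalue A (- c)"
  for A :: "real^'n^'n"
  unfolding is_eigenvalue_def by (auto simp: uminus_mv) (metis minus_equation_iff scaleR_minus_left)

lemma A_facts:
  fixes A :: "real^'n^'n" and mu L eta :: real
  assumes symm: "transpose A = A"
    and eig: "\<And>c. is_eigenvalue A c \<Longrightarrow> mu \<le> c \<and> c \<le> L"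
    and muL: "0 < mu" "mu \<le> L"
    and eta: "0 < eta" "eta \<le> 2 / (L + mu)"
  shows "mu * norm v \<le> norm (A *v v)" "norm (A *v v) \<le> L * norm v"
    "norm (v - eta *\<^sub>R (A *v v)) \<le> (1 - eta * mu) * norm v" "0 \<le> 1 - eta * mu"
proof -
  have qup: "w \<bullet> (A *v w) \<le> L * (norm w)^2" for w
  proof -
    obtain M where M: "is_eigenvalue A M" "\<And>v. v \<bullet> (A *v v) \<le> M * (norm v)^2"
      using quad_max_eig[OF symm] by blast
    have "M \<le> L" using eig[OF M(1)] by simp
    hence "M * (norm w)^2 \<le> L * (norm w)^2" by (simp add: mult_right_mono)
    thus ?thesis using M(2)[of w] by linarith
  qed
  have qlo: "mu * (norm w)^2 \<le> w \<bullet> (A *v w)" for w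
  proof -
    have "transpose (- A) = - A" using symm by (simp add: transpose_uminus)
    then obtain M where M: "is_eigenvalue (- A) M" "\<And>v. v \<bullet> ((- A) *v v) \<le> M * (norm v)^2"
      using quad_max_eig by blast
    have "mu \<le> - M" using eig[OF eig_uminus[OF M(1)]] by simp
    hence "mu * (norm w)^2 \<le> (- M) * (norm w)^2" by (intro mult_right_mono) auto
    thus ?thesis using M(2)[of w] by (simp add: uminus_mv)
  qed
  have Lmu: "L + mu > 0" using muL by simp
  have etaL: "eta * (L + mu) \<le> 2" using eta Lmu by (simp add: le_divide_eq)
  show "mu * norm v \<le> norm (A *v v)"
  proof (cases "v = 0")
    case False
    have "mu * (norm v * norm v) \<le> norm v * norm (A *v v)"
      using qlo[of v] norm_cauchy_schwarz[of v "A *v v"] by (simp add: power2_eq_square)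
    hence "norm v * (mu * norm v) \<le> norm v * norm (A *v v)" by (simp add: algebra_simps)
    thus ?thesis using False by simp
  qed simp
  show "norm (A *v v) \<le> L * norm v"
  proof (rule sym_bound[where f = "(*v) A"])
    show "linear ((*v) A)" by simp
    show "x \<bullet> (A *v y) = (A *v x) \<bullet> y" for x y by (rule sym_inner[OF symm])
    show "\<bar>w \<bullet> (A *v w)\<bar> \<le> L * (norm w)^2" for w
      using qlo[of w] qup[of w] muL by (smt (verit) zero_le_mult_iff zero_le_power2)
  qed
  have emu: "eta * mu \<le> 1"
  proof -
    have "eta * mu \<le> eta * L" using eta muL by simp
    thus ?thesis using etaL by (simp add: algebra_simps)
  qed
  show "0 \<le> 1 - eta * mu" using emu by simp
  show "norm (v - eta *\<^sub>R (A *v v)) \<le> (1 - eta * mu) * norm v"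
  proof (rule sym_bound[where f = "\<lambda>v. v - eta *\<^sub>R (A *v v)"])
    show "linear (\<lambda>v. v - eta *\<^sub>R (A *v v))"
      unfolding linear_iff by (simp add: algebra_simps)
    show "x \<bullet> (y - eta *\<^sub>R (A *v y)) = (x - eta *\<^sub>R (A *v x)) \<bullet> y" for x y
      using sym_inner[OF symm, of x y] by (simp add: inner_diff_left inner_diff_right)
    show "\<bar>w \<bullet> (w - eta *\<^sub>R (A *v w))\<bar> \<le> (1 - eta * mu) * (norm w)^2" for w
    proof -
      have e: "w \<bullet> (w - eta *\<^sub>R (A *v w)) = (norm w)^2 - eta * (w \<bullet> (A *v w))"
        by (simp add: inner_diff_right power2_norm_eq_inner)
      have "eta * (mu * (norm w)^2) \<le> eta * (w \<bullet> (A *v w))" using qlo[of w] eta by simp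
      moreover have "eta * (w \<bullet> (A *v w)) \<le> eta * (L * (norm w)^2)" using qup[of w] eta by simp
      moreover have "(eta * L - 1) * (norm w)^2 \<le> (1 - eta * mu) * (norm w)^2"
        using etaL by (intro mult_right_mono) (auto simp: algebra_simps)
      ultimately show ?thesis unfolding e by (simp add: algebra_simps abs_le_iff)
    qed
  qed
qed

lemma aa_weights_spec:
  fixes u :: "nat \<Rightarrow> real^'n"
  assumes fin: "finite J" and lam: "lam > 0"
  shows "(\<forall>j. j \<notin> J \<longrightarrow> aa_weights u J g lam j = 0) \<and>
     (\<forall>i\<in>J. (\<Sum>j\<in>J. (u i \<bullet> u j) * aa_weights u J g lam j) + lam * aa_weights u J g lam i = u i \<bullet> g)"
proof -
  define P where "P = (\<lambda>\<alpha>::nat\<Rightarrow>real. (\<forall>j. j \<notin> J \<longrightarrow> \<alpha> j = 0) \<and>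
      (\<forall>i\<in>J. (\<Sum>j\<in>J. (u i \<bullet> u j) * \<alpha> j) + lam * \<alpha> i = u i \<bullet> g))"
  define F where "F = (\<lambda>w::real^'n. (\<Sum>j\<in>J. (u j \<bullet> w) *\<^sub>R u j) + lam *\<^sub>R w)"
  have linF: "linear F" unfolding linear_iff F_def
    by (simp add: inner_add_right scaleR_add_left sum.distrib scaleR_sum_right algebra_simps)
  have F0: "w = 0" if "F w = 0" for w
  proof -
    have "w \<bullet> F w = (\<Sum>j\<in>J. (u j \<bullet> w)^2) + lam * (w \<bullet> w)"
      unfolding F_def by (simp add: inner_add_right inner_sum_right power2_eq_square inner_commute)
    hence "(\<Sum>j\<in>J. (u j \<bullet> w)^2) + lam * (w \<bullet> w) = 0" using that by simp
    moreover have "(\<Sum>j\<in>J. (u j \<bullet> w)^2) \<ge> 0" by (simp add: sum_nonneg)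
    moreover have "w \<bullet> w \<ge> 0" by simp
    moreover have "lam * (w \<bullet> w) \<ge> 0" using lam by simp
    ultimately have "lam * (w \<bullet> w) = 0" by linarith
    thus ?thesis using lam by simp
  qed
  have "inj F"
  proof (rule injI)
    fix x y assume "F x = F y"
    hence "F (x - y) = 0" by (simp add: linear_diff[OF linF])
    thus "x = y" using F0[of "x - y"] by simp
  qed
  hence "surj F" using linear_injective_imp_surjective[OF linF] by simp
  then obtain w where w: "F w = g" by (metis surjD)
  define \<alpha> where "\<alpha> = (\<lambda>j. if j \<in> J then u j \<bullet> w else 0)"
  have ex: "P \<alpha>" unfolding P_def
  proof (intro conjI allI impI ballI)
    fix j assume "j \<notin> J" thus "\<alpha> j = 0" by (simp add: \<alpha>_def)
  next
    fix i assume i: "i \<in> J"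
    have "(\<Sum>j\<in>J. (u i \<bullet> u j) * \<alpha> j) = (\<Sum>j\<in>J. (u i \<bullet> u j) * (u j \<bullet> w))"
      by (rule sum.cong) (auto simp: \<alpha>_def)
    moreover have "u i \<bullet> g = (\<Sum>j\<in>J. (u i \<bullet> u j) * (u j \<bullet> w)) + lam * (u i \<bullet> w)"
      unfolding w[symmetric] F_def by (simp add: inner_add_right inner_sum_right mult.commute)
    ultimately show "(\<Sum>j\<in>J. (u i \<bullet> u j) * \<alpha> j) + lam * \<alpha> i = u i \<bullet> g"
      using i by (simp add: \<alpha>_def)
  qed
  have un: "a = b" if a: "P a" and b: "P b" for a b
  proof -
    define d where "d = (\<lambda>j. a j - b j)"
    define s where "s = (\<Sum>j\<in>J. d j *\<^sub>R u j)"
    have di: "u i \<bullet> s + lam * d i = 0" if "i \<in> J" for i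
    proof -
      have "(\<Sum>j\<in>J. (u i \<bullet> u j) * a j) + lam * a i = (\<Sum>j\<in>J. (u i \<bullet> u j) * b j) + lam * b i"
        using a b that unfolding P_def by auto
      moreover have "u i \<bullet> s = (\<Sum>j\<in>J. (u i \<bullet> u j) * a j) - (\<Sum>j\<in>J. (u i \<bullet> u j) * b j)"
        unfolding s_def d_def by (simp add: inner_sum_right sum_subtractf[symmetric] algebra_simps)
      ultimately show ?thesis by (simp add: d_def algebra_simps)
    qed
    have "s \<bullet> s = (\<Sum>i\<in>J. d i * (u i \<bullet> s))"
      unfolding s_def[of] by (simp add: inner_sum_left inner_commute)
    also have "\<dots> = (\<Sum>i\<in>J. - lam * (d i)^2)"
    proof (rule sum.cong)
      fix i assume "i \<in> J"
      hence "u i \<bullet> s = - lam * d i" using di[of i] by linarith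
      thus "d i * (u i \<bullet> s) = - lam * (d i)^2" by (simp add: power2_eq_square)
    qed simp
    finally have "s \<bullet> s + lam * (\<Sum>i\<in>J. (d i)^2) = 0"
      by (simp add: sum_negf sum_distrib_left)
    moreover have "(\<Sum>i\<in>J. (d i)^2) \<ge> 0" by (simp add: sum_nonneg)
    moreover have "s \<bullet> s \<ge> 0" by simp
    moreover have "lam * (\<Sum>i\<in>J. (d i)^2) \<ge> 0" using lam calculation(2) by simp
    ultimately have "lam * (\<Sum>i\<in>J. (d i)^2) = 0" by linarith
    hence "(\<Sum>i\<in>J. (d i)^2) = 0" using lam by simp
    hence "\<forall>i\<in>J. (d i)^2 = 0" using fin by (simp add: sum_nonneg_eq_0_iff)
    hence "\<forall>i\<in>J. a i = b i" by (simp add: d_def)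
    moreover have "\<forall>i. i \<notin> J \<longrightarrow> a i = b i" using a b unfolding P_def by auto
    ultimately show ?thesis by blast
  qed
  have "P (aa_weights u J g lam)" unfolding aa_weights_def P_def[symmetric]
    by (rule theI[of P \<alpha>]) (use ex un in auto)
  thus ?thesis unfolding P_def .
qed

lemma pi_le:
  fixes u :: "nat \<Rightarrow> real^'n"
  assumes fin: "finite J" and lam: "lam > 0"
  shows "norm (g - (\<Sum>j\<in>J. aa_weights u J g lam j *\<^sub>R u j)) \<le> norm g"
proof -
  define a where "a = aa_weights u J g lam"
  have sp: "\<forall>i\<in>J. (\<Sum>j\<in>J. (u i \<bullet> u j) * a j) + lam * a i = u i \<bullet> g"
    using aa_weights_spec[OF fin lam] unfolding a_def by blast
  define s where "s = (\<Sum>j\<in>J. a j *\<^sub>R u j)"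
  define r where "r = g - s"
  have ur: "u i \<bullet> r = lam * a i" if "i \<in> J" for i
  proof -
    have "u i \<bullet> s = (\<Sum>j\<in>J. (u i \<bullet> u j) * a j)"
      unfolding s_def by (simp add: inner_sum_right mult.commute)
    thus ?thesis using sp that unfolding r_def by (simp add: inner_diff_right) (metis add_diff_cancel_left')
  qed
  have "s \<bullet> r = (\<Sum>i\<in>J. a i * (u i \<bullet> r))" unfolding s_def by (simp add: inner_sum_left)
  also have "\<dots> = (\<Sum>i\<in>J. lam * (a i)^2)"
    by (rule sum.cong) (simp_all add: ur power2_eq_square)
  finally have "s \<bullet> r \<ge> 0" using lam by (simp add: sum_nonneg)
  have "(norm g)^2 = (norm r)^2 + 2 * (s \<bullet> r) + (norm s)^2"
    unfolding r_def power2_norm_eq_inner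
    by (simp add: inner_diff_left inner_diff_right inner_commute)
  hence "(norm r)^2 \<le> (norm g)^2" using \<open>s \<bullet> r \<ge> 0\<close> by (smt (verit) zero_le_power2)
  hence "norm r \<le> norm g" by (simp add: power2_le_iff_abs_le)
  thus ?thesis unfolding r_def s_def a_def .
qed

lemma grad_next:
  "grad_f A b (aa_next A b eta lam m x k) =
     aa_Pi_grad A b lam m x k - eta *\<^sub>R (A *v aa_Pi_grad A b lam m x k)"
proof -
  define J where "J = aa_window m k"
  define a where "a = aa_alpha A b lam m x k"
  define g where "g = (\<lambda>j. grad_f A b (x j))"
  define h where "h = (\<lambda>v::real^'a. v - eta *\<^sub>R (A *v v))"
  define w where "w = 1 - (\<Sum>j\<in>J. a j)"
  have linh: "linear h" unfolding h_def linear_iff by (simp add: algebra_simps)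
  have linA: "linear ((*v) A)" by simp
  have hG: "grad_f A b (G_map A b eta y) = h (grad_f A b y)" for y
    unfolding G_map_def grad_f_def h_def by (simp add: algebra_simps)
  let ?G = "\<lambda>j. G_map A b eta (x j)"
  have "grad_f A b (aa_next A b eta lam m x k) =
      A *v (\<Sum>j\<in>J. a j *\<^sub>R ?G j) + w *\<^sub>R (A *v ?G k) - ((\<Sum>j\<in>J. a j) + w) *\<^sub>R b"
    unfolding grad_f_def aa_next_def J_def[symmetric] a_def[symmetric] w_def[symmetric]
    by (simp add: w_def algebra_simps)
  also have "\<dots> = (\<Sum>j\<in>J. a j *\<^sub>R (A *v ?G j - b)) + w *\<^sub>R (A *v ?G k - b)"
    by (simp add: linear_sum[OF linA] matrix_vector_mult_scaleR scaleR_sum_left sum_subtractf scaleR_diff_right algebra_simps)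
  also have "\<dots> = (\<Sum>j\<in>J. a j *\<^sub>R h (g j)) + w *\<^sub>R h (g k)"
    using hG unfolding grad_f_def g_def by simp
  also have "\<dots> = h ((\<Sum>j\<in>J. a j *\<^sub>R g j) + w *\<^sub>R g k)"
    by (simp add: linear_add[OF linh] linear_sum[OF linh] linear_scale[OF linh])
  also have "(\<Sum>j\<in>J. a j *\<^sub>R g j) + w *\<^sub>R g k = g k - (\<Sum>j\<in>J. a j *\<^sub>R (g k - g j))"
    by (simp add: w_def scaleR_diff_right sum_subtractf scaleR_sum_left algebra_simps)
  also have "\<dots> = aa_Pi_grad A b lam m x k"
    unfolding aa_Pi_grad_def aa_U_def J_def a_def g_def ..
  finally show ?thesis unfolding h_def .
qed

theorem theorem3p1:
  fixes A :: "real^'n^'n" and b x0 :: "real^'n" and x :: "nat \<Rightarrow> real^'n"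
    and mu L eta lam :: real and m :: nat
  assumes symm: "transpose A = A"
    and eig: "\<And>c. is_eigenvalue A c \<Longrightarrow> mu \<le> c \<and> c \<le> L"
    and muL: "0 < mu" "mu \<le> L"
    and eta: "0 < eta" "eta \<le> 2 / (L + mu)"
    and m: "m \<ge> 1"
    and lam: "lam > 0"
    and x0: "x 0 = x0"
    and step: "\<And>k. x (Suc k) = aa_next A b eta lam m x k"
  shows "\<forall>k. (\<forall>j\<le>k. grad_f A b (x j) \<noteq> 0) \<longrightarrow>
      norm (grad_f A b (x (Suc k))) / norm (grad_f A b (x k))
        \<le> aa_delta A b lam m x k * (1 - eta * mu)
      \<and> aa_delta A b lam m x k \<le> 1
      \<and> norm (x (Suc k) - matrix_inv A *v b)
        \<le> (\<Prod>j\<le>k. aa_delta A b lam m x j) * (1 - eta * mu) ^ (Suc k) * (L / mu)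
           * norm (x0 - matrix_inv A *v b)"
proof -
  note F = A_facts[OF symm eig muL eta]
  define c where "c = 1 - eta * mu"
  have c0: "0 \<le> c" using F(4) c_def by simp
  define xs where "xs = matrix_inv A *v b"
  define g where "g = (\<lambda>k. grad_f A b (x k))"
  define P where "P = (\<lambda>k. aa_Pi_grad A b lam m x k)"
  define d where "d = (\<lambda>k. aa_delta A b lam m x k)"
  have "inj ((*v) A)"
  proof (rule injI)
    fix y z assume "A *v y = A *v z"
    hence "A *v (y - z) = 0" by (simp add: matrix_vector_mult_diff_distrib)
    hence "mu * norm (y - z) \<le> 0" using F(1)[of "y - z"] by simp
    thus "y = z" using muL by (simp add: mult_le_0_iff)
  qed
  hence "invertible A" using matrix_left_invertible_injective invertible_left_inverse by blast
  hence "A ** matrix_inv A = mat 1 \<and> matrix_inv A ** A = mat 1"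
    unfolding invertible_def matrix_inv_def by (rule someI_ex)
  hence Axs: "A *v xs = b" unfolding xs_def by (simp add: matrix_vector_mul_assoc)
  have gA: "grad_f A b y = A *v (y - xs)" for y
    unfolding grad_f_def using Axs by (simp add: matrix_vector_mult_diff_distrib)
  have dist: "norm (y - xs) \<le> norm (grad_f A b y) / mu" for y
    using F(1)[of "y - xs"] muL unfolding gA by (simp add: le_divide_eq mult.commute)
  have g0: "norm (g 0) \<le> L * norm (x0 - xs)" using F(2)[of "x0 - xs"] unfolding g_def gA x0 .
  have onestep: "norm (g (Suc k)) \<le> c * norm (P k)" for k
    unfolding g_def step grad_next P_def c_def by (rule F(3))
  have Ple: "norm (P k) \<le> norm (g k)" for k
    unfolding P_def g_def aa_Pi_grad_def aa_alpha_def
    by (rule pi_le) (simp_all add: aa_window_def lam)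
  have dP: "d k * norm (g k) = norm (P k)" if "g k \<noteq> 0" for k
    using that unfolding d_def aa_delta_def g_def P_def by simp
  have d0: "0 \<le> d k" for k unfolding d_def aa_delta_def by simp
  have stepd: "norm (g (Suc k)) \<le> d k * c * norm (g k)" if "g k \<noteq> 0" for k
    using onestep[of k] dP[OF that] by (simp add: algebra_simps)
  have ind: "(\<forall>j\<le>k. g j \<noteq> 0) \<longrightarrow> norm (g (Suc k)) \<le> (\<Prod>j\<le>k. d j) * c ^ Suc k * norm (g 0)" for k
  proof (induction k)
    case 0 show ?case using stepd[of 0] by (simp add: mult.commute)
  next
    case (Suc k)
    show ?case
    proof
      assume h: "\<forall>j\<le>Suc k. g j \<noteq> 0"
      hence IH: "norm (g (Suc k)) \<le> (\<Prod>j\<le>k. d j) * c ^ Suc k * norm (g 0)" using Suc by simp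
      have "norm (g (Suc (Suc k))) \<le> d (Suc k) * c * norm (g (Suc k))" using stepd h by simp
      also have "\<dots> \<le> d (Suc k) * c * ((\<Prod>j\<le>k. d j) * c ^ Suc k * norm (g 0))"
        using IH d0 c0 by (intro mult_left_mono) auto
      also have "\<dots> = (\<Prod>j\<le>Suc k. d j) * c ^ Suc (Suc k) * norm (g 0)"
        by (simp add: atMost_Suc algebra_simps)
      finally show "norm (g (Suc (Suc k))) \<le> (\<Prod>j\<le>Suc k. d j) * c ^ Suc (Suc k) * norm (g 0)" .
    qed
  qed
  show ?thesis
  proof (intro allI impI conjI)
    fix k assume h: "\<forall>j\<le>k. grad_f A b (x j) \<noteq> 0"
    hence gk: "g k \<noteq> 0" unfolding g_def by simp
    have ng: "norm (g k) > 0" using gk by simp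
    have "norm (g (Suc k)) / norm (g k) \<le> d k * c"
      using stepd[OF gk] ng by (simp add: divide_le_eq algebra_simps)
    thus "norm (grad_f A b (x (Suc k))) / norm (grad_f A b (x k)) \<le> aa_delta A b lam m x k * (1 - eta * mu)"
      unfolding g_def d_def c_def .
    have "d k * norm (g k) \<le> 1 * norm (g k)" using Ple[of k] dP[OF gk] by simp
    hence "d k \<le> 1" using ng by (rule mult_right_le_imp_le)
    thus "aa_delta A b lam m x k \<le> 1" unfolding d_def .
    have Pd: "0 \<le> (\<Prod>j\<le>k. d j) * c ^ Suc k" using d0 c0 by (simp add: prod_nonneg)
    have "norm (x (Suc k) - xs) \<le> norm (g (Suc k)) / mu" using dist unfolding g_def by simp
    also have "\<dots> \<le> (\<Prod>j\<le>k. d j) * c ^ Suc k * norm (g 0) / mu"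
      using ind[of k] h muL unfolding g_def by (simp add: divide_right_mono)
    also have "\<dots> \<le> (\<Prod>j\<le>k. d j) * c ^ Suc k * (L * norm (x0 - xs)) / mu"
      using g0 Pd muL by (intro divide_right_mono mult_left_mono) auto
    also have "\<dots> = (\<Prod>j\<le>k. d j) * c ^ Suc k * (L / mu) * norm (x0 - xs)" by simp
    finally show "norm (x (Suc k) - matrix_inv A *v b)
        \<le> (\<Prod>j\<le>k. aa_delta A b lam m x j) * (1 - eta * mu) ^ (Suc k) * (L / mu)
           * norm (x0 - matrix_inv A *v b)" unfolding xs_def d_def c_def .
  qed
qed

end
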